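(* For every integer $d\ge 1$, the class of finite unit ball graphs in $\mathbb{R}^d$ has asymptotic dimension at most $d$.
   Context: A unit ball graph in $\mathbb{R}^d$ is a graph whose vertices can be mapped to points of $\mathbb{R}^d$ such that two vertices are adjacent if and only if the corresponding points are at Euclidean distance at most $1$. Graphs are metric spaces with the shortest-path distance. For a metric space $(X,d)$, a family $\mathcal U$ of subsets is $D$-bounded if every member has diameter at most $D$, and $r$-disjoint if points in different members are at distance $>r$. A function $D:\mathbb{R}^+\to\mathbb{R}^+$ is an $n$-dimensional control function for $X$ if for every $r>0$ there is a cover $\mathcal U=\mathcal U_1\cup\dots\cup\mathcal U_{n+1}$ of $X$ with each $\mathcal U_i$ $r$-disjoint and each member $D(r)$-bounded; a class has asymptotic dimension at most $n$ if one such function works for all its members. *)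

theory Defs
  imports "HOL-Analysis.Analysis" "HOL-Library.Extended_Nat"
begin

text \<open>A finite (simple) graph is given by a finite vertex set V :: nat set and an
adjacency relation E. Vertices are natural numbers (every finite graph is
isomorphic to one of these).\<close>

definition simple_graph :: "nat set \<Rightarrow> (nat \<Rightarrow> nat \<Rightarrow> bool) \<Rightarrow> bool" where
  "simple_graph V E \<longleftrightarrow> finite V \<and>
     (\<forall>u v. E u v \<longrightarrow> u \<in> V \<and> v \<in> V \<and> u \<noteq> v) \<and> (\<forall>u v. E u v \<longrightarrow> E v u)"

text \<open>Unit ball graph in the Euclidean space real^'n (dimension CARD('n)).
The map p need not be injective.\<close>
definition unit_ball_graph :: "'n::finite itself \<Rightarrow> nat set \<Rightarrow> (nat \<Rightarrow> nat \<Rightarrow> bool) \<Rightarrow> bool" where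
  "unit_ball_graph _ V E \<longleftrightarrow> simple_graph V E \<and>
     (\<exists>p :: nat \<Rightarrow> real ^ 'n. \<forall>u\<in>V. \<forall>v\<in>V. u \<noteq> v \<longrightarrow> (E u v \<longleftrightarrow> dist (p u) (p v) \<le> 1))"

text \<open>Walks given as vertex lists; a walk with k+1 vertices has length k.\<close>
definition is_walk :: "nat set \<Rightarrow> (nat \<Rightarrow> nat \<Rightarrow> bool) \<Rightarrow> nat list \<Rightarrow> nat \<Rightarrow> nat \<Rightarrow> bool" where
  "is_walk V E xs u v \<longleftrightarrow> xs \<noteq> [] \<and> hd xs = u \<and> last xs = v \<and> set xs \<subseteq> V \<and>
     (\<forall>i. Suc i < length xs \<longrightarrow> E (xs ! i) (xs ! Suc i))"

text \<open>Shortest-path distance (infinite between different components).\<close>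
definition gdist :: "nat set \<Rightarrow> (nat \<Rightarrow> nat \<Rightarrow> bool) \<Rightarrow> nat \<Rightarrow> nat \<Rightarrow> enat" where
  "gdist V E u v = (INF xs \<in> {xs. is_walk V E xs u v}. enat (length xs - 1))"

definition dist_le :: "nat set \<Rightarrow> (nat \<Rightarrow> nat \<Rightarrow> bool) \<Rightarrow> nat \<Rightarrow> nat \<Rightarrow> real \<Rightarrow> bool" where
  "dist_le V E u v r \<longleftrightarrow> (\<exists>n. gdist V E u v = enat n \<and> real n \<le> r)"

definition D_bounded :: "nat set \<Rightarrow> (nat \<Rightarrow> nat \<Rightarrow> bool) \<Rightarrow> real \<Rightarrow> nat set set \<Rightarrow> bool" where
  "D_bounded V E D \<U> \<longleftrightarrow> (\<forall>U\<in>\<U>. \<forall>x\<in>U. \<forall>y\<in>U. dist_le V E x y D)"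

definition r_disjoint :: "nat set \<Rightarrow> (nat \<Rightarrow> nat \<Rightarrow> bool) \<Rightarrow> real \<Rightarrow> nat set set \<Rightarrow> bool" where
  "r_disjoint V E r \<U> \<longleftrightarrow>
     (\<forall>U\<in>\<U>. \<forall>U'\<in>\<U>. U \<noteq> U' \<longrightarrow> (\<forall>x\<in>U. \<forall>y\<in>U'. \<not> dist_le V E x y r))"

definition control_function ::
  "nat \<Rightarrow> (real \<Rightarrow> real) \<Rightarrow> nat set \<Rightarrow> (nat \<Rightarrow> nat \<Rightarrow> bool) \<Rightarrow> bool" where
  "control_function n D V E \<longleftrightarrow>
     (\<forall>r>0. \<exists>\<U> :: nat \<Rightarrow> nat set set.
        (\<forall>i\<le>n. \<forall>U\<in>\<U> i. U \<subseteq> V) \<and>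
        (\<Union>i\<le>n. \<Union>(\<U> i)) = V \<and>
        (\<forall>i\<le>n. r_disjoint V E r (\<U> i) \<and> D_bounded V E (D r) (\<U> i)))"

definition asdim_le :: "(nat set \<times> (nat \<Rightarrow> nat \<Rightarrow> bool)) set \<Rightarrow> nat \<Rightarrow> bool" where
  "asdim_le \<C> n \<longleftrightarrow> (\<exists>D :: real \<Rightarrow> real. (\<forall>r>0. D r > 0) \<and>
     (\<forall>(V, E)\<in>\<C>. control_function n D V E))"

end

theory Submission
  imports Defs
begin


lemma is_walk_Cons:
  "is_walk V E (u # ys) u' v \<longleftrightarrow> u = u' \<and> u \<in> V \<and>
     (if ys = [] then v = u else E u (hd ys) \<and> is_walk V E ys (hd ys) v)"
proof -
  have A: "(\<forall>i. Suc i < length (u#ys) \<longrightarrow> E ((u#ys) ! i) ((u#ys) ! Suc i)) \<longleftrightarrow>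
     (ys \<noteq> [] \<longrightarrow> E u (hd ys)) \<and> (\<forall>i. Suc i < length ys \<longrightarrow> E (ys ! i) (ys ! Suc i))"
    (is "?L \<longleftrightarrow> ?R")
  proof
    assume L: ?L
    show ?R
    proof safe
      assume "ys \<noteq> []" then show "E u (hd ys)" using L[rule_format, of 0] by (simp add: hd_conv_nth)
    next
      fix i assume "Suc i < length ys" then show "E (ys ! i) (ys ! Suc i)"
        using L[rule_format, of "Suc i"] by simp
    qed
  next
    assume R: ?R
    show ?L
    proof (intro allI impI)
      fix i assume i: "Suc i < length (u#ys)"
      show "E ((u#ys) ! i) ((u#ys) ! Suc i)"
      proof (cases i)
        case 0 then show ?thesis using R i by (simp add: hd_conv_nth)
      next
        case (Suc k) then show ?thesis using R i by simp
      qed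
    qed
  qed
  show ?thesis unfolding is_walk_def A by (auto simp: hd_conv_nth)
qed

lemma is_walk_single: "u \<in> V \<Longrightarrow> is_walk V E [u] u u"
  by (simp add: is_walk_def)

lemma is_walk_edge: "u \<in> V \<Longrightarrow> v \<in> V \<Longrightarrow> E u v \<Longrightarrow> is_walk V E [u, v] u v"
  by (simp add: is_walk_Cons is_walk_single)

lemma is_walk_append:
  "is_walk V E xs u v \<Longrightarrow> is_walk V E ys v w \<Longrightarrow> is_walk V E (xs @ tl ys) u w
    \<and> length (xs @ tl ys) - 1 = (length xs - 1) + (length ys - 1)"
proof (induction xs arbitrary: u)
  case Nil then show ?case by (simp add: is_walk_def)
next
  case (Cons x xs)
  show ?case
  proof (cases "xs = []")
    case True
    with Cons.prems have "x = u" "v = u" by (auto simp: is_walk_Cons)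
    moreover have "ys \<noteq> []" "hd ys = v" using Cons.prems(2) by (auto simp: is_walk_def)
    moreover have "hd ys # tl ys = ys" using \<open>ys \<noteq> []\<close> by simp
    ultimately show ?thesis using True Cons.prems(2) by simp
  next
    case False
    with Cons.prems(1) have h: "x = u" "u \<in> V" "E u (hd xs)" "is_walk V E xs (hd xs) v"
      by (auto simp: is_walk_Cons)
    from Cons.IH[OF h(4) Cons.prems(2)] have ih: "is_walk V E (xs @ tl ys) (hd xs) w"
      "length (xs @ tl ys) - 1 = length xs - 1 + (length ys - 1)" by auto
    have "hd (xs @ tl ys) = hd xs" using False by simp
    then have "is_walk V E (x # (xs @ tl ys)) u w" using ih h False by (simp add: is_walk_Cons)
    moreover have "length xs > 0" using False by simp
    ultimately show ?thesis using ih by auto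
  qed
qed

lemma is_walk_rev:
  assumes sym: "\<And>a b. E a b \<Longrightarrow> E b a" and w: "is_walk V E xs u v"
  shows "is_walk V E (rev xs) v u"
proof -
  have ne: "xs \<noteq> []" using w by (simp add: is_walk_def)
  have "\<forall>i. Suc i < length (rev xs) \<longrightarrow> E (rev xs ! i) (rev xs ! Suc i)"
  proof (intro allI impI)
    fix i assume i: "Suc i < length (rev xs)"
    let ?j = "length xs - Suc (Suc i)"
    have "E (xs ! ?j) (xs ! Suc ?j)" using w i by (simp add: is_walk_def)
    moreover have "Suc ?j = length xs - Suc i" using i by simp
    ultimately show "E (rev xs ! i) (rev xs ! Suc i)" using i sym by (simp add: rev_nth)
  qed
  then show ?thesis using w ne by (simp add: is_walk_def hd_rev last_rev)
qed

lemma gdist_walk: "is_walk V E xs u v \<Longrightarrow> gdist V E u v \<le> enat (length xs - 1)"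
  unfolding gdist_def by (rule INF_lower) auto

lemma dist_le_walk:
  assumes "is_walk V E xs u v" "real (length xs - 1) \<le> a"
  shows "dist_le V E u v a"
proof -
  have g: "gdist V E u v \<le> enat (length xs - 1)" by (rule gdist_walk[OF assms(1)])
  then obtain n where n: "gdist V E u v = enat n" using enat_ile by blast
  with g have "n \<le> length xs - 1" by simp
  then show ?thesis unfolding dist_le_def using n assms(2)
    by (metis of_nat_le_iff order_trans)
qed

lemma dist_le_obtain:
  assumes "dist_le V E u v a"
  obtains xs where "is_walk V E xs u v" "real (length xs - 1) \<le> a"
proof -
  obtain n where n: "gdist V E u v = enat n" "real n \<le> a" using assms by (auto simp: dist_le_def)
  let ?A = "(\<lambda>xs. enat (length xs - 1)) ` {xs. is_walk V E xs u v}"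
  have "?A \<noteq> {}"
  proof
    assume "?A = {}"
    then have "gdist V E u v = \<infinity>" unfolding gdist_def by (simp add: Inf_enat_def)
    with n show False by simp
  qed
  then have "\<exists>x. x \<in> ?A" by blast
  then have "(LEAST x. x \<in> ?A) \<in> ?A" by (rule LeastI_ex)
  then have "Inf ?A \<in> ?A" using \<open>?A \<noteq> {}\<close> unfolding Inf_enat_def by simp
  then obtain xs where "is_walk V E xs u v" "enat (length xs - 1) = gdist V E u v"
    unfolding gdist_def by auto
  with n that show ?thesis by auto
qed

lemma dist_le_trans:
  assumes "dist_le V E u v a" "dist_le V E v w b"
  shows "dist_le V E u w (a + b)"
proof -
  obtain xs where xs: "is_walk V E xs u v" "real (length xs - 1) \<le> a" using assms(1) by (rule dist_le_obtain)
  obtain ys where ys: "is_walk V E ys v w" "real (length ys - 1) \<le> b" using assms(2) by (rule dist_le_obtain)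
  from is_walk_append[OF xs(1) ys(1)] xs(2) ys(2) show ?thesis
    by (intro dist_le_walk[of _ _ "xs @ tl ys"]) auto
qed

lemma dist_le_sym:
  assumes "\<And>a b. E a b \<Longrightarrow> E b a" "dist_le V E u v a"
  shows "dist_le V E v u a"
proof -
  obtain xs where xs: "is_walk V E xs u v" "real (length xs - 1) \<le> a" using assms(2) by (rule dist_le_obtain)
  show ?thesis using is_walk_rev[OF assms(1) xs(1)] xs(2) by (intro dist_le_walk[of _ _ "rev xs"]) auto
qed

lemma dist_le_mono: "dist_le V E u v a \<Longrightarrow> a \<le> b \<Longrightarrow> dist_le V E u v b"
  unfolding dist_le_def by auto

lemma walk_euclid:
  fixes p :: "nat \<Rightarrow> 'a::metric_space"
  assumes pe: "\<And>u v. u \<in> V \<Longrightarrow> v \<in> V \<Longrightarrow> E u v \<Longrightarrow> dist (p u) (p v) \<le> 1"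
  shows "is_walk V E xs u v \<Longrightarrow> dist (p u) (p v) \<le> real (length xs - 1)"
proof (induction xs arbitrary: u)
  case Nil then show ?case by (simp add: is_walk_def)
next
  case (Cons x ys)
  show ?case
  proof (cases "ys = []")
    case True then show ?thesis using Cons.prems by (simp add: is_walk_Cons)
  next
    case False
    then have h: "x = u" "u \<in> V" "E u (hd ys)" "is_walk V E ys (hd ys) v" using Cons.prems by (auto simp: is_walk_Cons)
    have "hd ys \<in> V" using h(4) by (auto simp: is_walk_def)
    then have "dist (p u) (p (hd ys)) \<le> 1" using pe h by auto
    moreover have "dist (p (hd ys)) (p v) \<le> real (length ys - 1)" using Cons.IH[OF h(4)] .
    moreover have "dist (p u) (p v) \<le> dist (p u) (p (hd ys)) + dist (p (hd ys)) (p v)" by (rule dist_triangle)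
    moreover have "length ys > 0" using False by simp
    ultimately show ?thesis by (simp add: of_nat_diff)
  qed
qed



definition hh :: "nat \<Rightarrow> real" where "hh d = 1 / (4 * (real d + 1))"
definition al :: "nat \<Rightarrow> nat \<Rightarrow> real" where "al d k = (2 * real k + 1) * hh d"
definition be :: "nat \<Rightarrow> nat \<Rightarrow> real" where "be d k = (2 * real k + 2) * hh d"
definition dz :: "real \<Rightarrow> real" where "dz t = \<bar>t - of_int \<lfloor>t + 1/2\<rfloor>\<bar>"
definition kc :: "nat \<Rightarrow> nat \<Rightarrow> real \<Rightarrow> int \<times> bool" where
  "kc d k t = (if dz t \<le> al d k then (\<lfloor>t + 1/2\<rfloor>, True) else (\<lfloor>t\<rfloor>, False))"

lemma hh_pos: "hh d > 0" by (simp add: hh_def)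
lemma be_al: "be d k = al d k + hh d" by (simp add: be_def al_def algebra_simps)
lemma al_le: "k \<le> d \<Longrightarrow> al d k \<le> 1/2 - hh d"
proof -
  assume "k \<le> d"
  then have "(2 * real k + 1) * hh d \<le> (2 * real d + 1) * hh d" using hh_pos[of d]
    by (intro mult_right_mono) auto
  also have "\<dots> = 1/2 - hh d" by (simp add: hh_def field_simps)
  finally show ?thesis by (simp add: al_def)
qed
lemma be_ge: "be d k \<ge> hh d" using hh_pos[of d] by (simp add: be_def)

lemma dz_min: "dz t \<le> \<bar>t - of_int m\<bar>"
proof -
  let ?n = "\<lfloor>t + 1/2\<rfloor>"
  have a: "of_int ?n \<le> t + 1/2" "t + 1/2 < of_int ?n + 1" by linarith+
  show ?thesis
  proof (cases "m = ?n")
    case True then show ?thesis by (simp add: dz_def)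
  next
    case False
    then have "m \<ge> ?n + 1 \<or> m \<le> ?n - 1" by linarith
    then have "real_of_int m \<ge> of_int ?n + 1 \<or> real_of_int m \<le> of_int ?n - 1" by (metis of_int_add of_int_diff of_int_le_iff of_int_1)
    then show ?thesis using a unfolding dz_def by linarith
  qed
qed

lemma dz_le_half: "dz t \<le> 1/2"
proof -
  have "of_int \<lfloor>t + 1/2\<rfloor> \<le> t + 1/2" "t + 1/2 < of_int \<lfloor>t + 1/2\<rfloor> + 1" by linarith+
  then show ?thesis unfolding dz_def by linarith
qed

lemma kc_sep:
  assumes k: "k \<le> d"
    and f1: "dz t1 \<le> al d k \<or> dz t1 \<ge> be d k"
    and f2: "dz t2 \<le> al d k \<or> dz t2 \<ge> be d k"
    and ne: "kc d k t1 \<noteq> kc d k t2"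
  shows "\<bar>t1 - t2\<bar> \<ge> hh d"
proof -
  have h: "hh d > 0" "be d k = al d k + hh d" "al d k \<le> 1/2 - hh d" using hh_pos be_al al_le[OF k] by auto
  consider (nn) "dz t1 \<le> al d k" "dz t2 \<le> al d k" | (nf) "dz t1 \<le> al d k" "\<not> dz t2 \<le> al d k"
    | (fn) "\<not> dz t1 \<le> al d k" "dz t2 \<le> al d k" | (ff) "\<not> dz t1 \<le> al d k" "\<not> dz t2 \<le> al d k" by blast
  then show ?thesis
  proof cases
    case nn
    let ?n1 = "\<lfloor>t1 + 1/2\<rfloor>" and ?n2 = "\<lfloor>t2 + 1/2\<rfloor>"
    have "?n1 \<noteq> ?n2" using ne nn by (simp add: kc_def)
    then have "?n1 \<ge> ?n2 + 1 \<or> ?n2 \<ge> ?n1 + 1" by linarith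
    then have "real_of_int ?n1 \<ge> of_int ?n2 + 1 \<or> real_of_int ?n2 \<ge> of_int ?n1 + 1"
      by (metis of_int_add of_int_le_iff of_int_1)
    moreover have "\<bar>t1 - of_int ?n1\<bar> \<le> al d k" "\<bar>t2 - of_int ?n2\<bar> \<le> al d k" using nn by (auto simp: dz_def)
    ultimately show ?thesis using h by linarith
  next
    case nf
    let ?n1 = "\<lfloor>t1 + 1/2\<rfloor>"
    have "\<bar>t1 - of_int ?n1\<bar> \<le> al d k" using nf by (auto simp: dz_def)
    moreover have "\<bar>t2 - of_int ?n1\<bar> \<ge> be d k" using nf f2 dz_min[of t2 ?n1] by linarith
    ultimately show ?thesis using h by linarith
  next
    case fn
    let ?n2 = "\<lfloor>t2 + 1/2\<rfloor>"
    have "\<bar>t2 - of_int ?n2\<bar> \<le> al d k" using fn by (auto simp: dz_def)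
    moreover have "\<bar>t1 - of_int ?n2\<bar> \<ge> be d k" using fn f1 dz_min[of t1 ?n2] by linarith
    ultimately show ?thesis using h by linarith
  next
    case ff
    have b1: "dz t1 \<ge> be d k" "dz t2 \<ge> be d k" using ff f1 f2 by auto
    have fl: "\<lfloor>t1\<rfloor> \<noteq> \<lfloor>t2\<rfloor>" using ne ff by (simp add: kc_def)
    have "be d k \<ge> hh d" by (rule be_ge)
    show ?thesis
    proof (cases "\<lfloor>t1\<rfloor> < \<lfloor>t2\<rfloor>")
      case True
      let ?m = "\<lfloor>t2\<rfloor>"
      have "t1 < of_int ?m" using True by linarith
      moreover have "of_int ?m \<le> t2" by simp
      moreover have "\<bar>t1 - of_int ?m\<bar> \<ge> be d k" "\<bar>t2 - of_int ?m\<bar> \<ge> be d k"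
        using b1 dz_min[of t1 ?m] dz_min[of t2 ?m] by linarith+
      ultimately show ?thesis using h \<open>be d k \<ge> hh d\<close> by linarith
    next
      case False
      then have F: "\<lfloor>t2\<rfloor> < \<lfloor>t1\<rfloor>" using fl by linarith
      let ?m = "\<lfloor>t1\<rfloor>"
      have "t2 < of_int ?m" using F by linarith
      moreover have "of_int ?m \<le> t1" by simp
      moreover have "\<bar>t1 - of_int ?m\<bar> \<ge> be d k" "\<bar>t2 - of_int ?m\<bar> \<ge> be d k"
        using b1 dz_min[of t1 ?m] dz_min[of t2 ?m] by linarith+
      ultimately show ?thesis using h \<open>be d k \<ge> hh d\<close> by linarith
    qed
  qed
qed

lemma kc_same:
  assumes k: "k \<le> d" and eq: "kc d k t1 = kc d k t2"
  shows "\<bar>t1 - t2\<bar> \<le> 1"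
proof (cases "dz t1 \<le> al d k")
  case True
  then have T2: "dz t2 \<le> al d k" and n: "\<lfloor>t1 + 1/2\<rfloor> = \<lfloor>t2 + 1/2\<rfloor>" using eq
    by (auto simp: kc_def split: if_splits)
  have "al d k \<le> 1/2" using al_le[OF k] hh_pos[of d] by linarith
  then show ?thesis using True T2 n unfolding dz_def by linarith
next
  case False
  then have "\<lfloor>t1\<rfloor> = \<lfloor>t2\<rfloor>" using eq by (auto simp: kc_def split: if_splits)
  then show ?thesis by linarith
qed



definition fre :: "nat \<Rightarrow> real \<Rightarrow> nat \<Rightarrow> real^'n \<Rightarrow> bool" where
  "fre d L k x \<longleftrightarrow> (\<forall>j. dz (x$j / L) \<le> al d k \<or> dz (x$j / L) \<ge> be d k)"
definition key :: "nat \<Rightarrow> real \<Rightarrow> nat \<Rightarrow> real^'n \<Rightarrow> 'n \<Rightarrow> int \<times> bool" where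
  "key d L k x = (\<lambda>j. kc d k (x$j / L))"
definition cell :: "nat \<Rightarrow> real^'n \<Rightarrow> 'n \<Rightarrow> int" where
  "cell d x = (\<lambda>j. \<lfloor>x$j * real d\<rfloor>)"

lemma exists_free:
  fixes x :: "real^'n::finite"
  shows "\<exists>k\<le>CARD('n). fre CARD('n) L k x"
proof (rule ccontr)
  let ?d = "CARD('n)"
  assume "\<not> ?thesis"
  then have "\<forall>k\<in>{..?d}. \<exists>j. al ?d k < dz (x$j / L) \<and> dz (x$j / L) < be ?d k"
    by (auto simp: fre_def not_le; metis not_le)
  then obtain f where f: "\<And>k. k \<in> {..?d} \<Longrightarrow> al ?d k < dz (x$(f k) / L) \<and> dz (x$(f k) / L) < be ?d k"
    by metis
  have "inj_on f {..?d}"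
  proof (rule inj_onI)
    fix a b assume a: "a \<in> {..?d}" and b: "b \<in> {..?d}" and e: "f a = f b"
    show "a = b"
    proof (rule ccontr)
      assume "a \<noteq> b"
      then have "a < b \<or> b < a" by arith
      moreover have "a < b \<Longrightarrow> be ?d a \<le> al ?d b" for a b
        using hh_pos[of ?d] by (simp add: be_def al_def mult_right_mono)
      ultimately show False using f[OF a] f[OF b] e by fastforce
    qed
  qed
  then have "card {..?d} \<le> card (UNIV :: 'n set)"
    by (rule card_inj_on_le) auto
  then show False by simp
qed

lemma key_sep:
  fixes x y :: "real^'n::finite"
  assumes k: "k \<le> d" and L: "L > 0" and fx: "fre d L k x" and fy: "fre d L k y"
    and ne: "key d L k x \<noteq> key d L k y"
  shows "dist x y \<ge> hh d * L"
proof -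
  obtain j where j: "kc d k (x$j / L) \<noteq> kc d k (y$j / L)" using ne by (auto simp: key_def)
  have "\<bar>x$j / L - y$j / L\<bar> \<ge> hh d"
    using kc_sep[OF k _ _ j] fx fy by (auto simp: fre_def)
  then have "hh d * L \<le> \<bar>x$j / L - y$j / L\<bar> * L" using L by (simp add: mult_right_mono)
  also have "\<dots> = \<bar>x$j - y$j\<bar>" using L by (simp add: field_simps abs_mult)
  also have "\<dots> = \<bar>(x - y)$j\<bar>" by simp
  also have "\<dots> \<le> norm (x - y)" by (rule component_le_norm_cart)
  finally show ?thesis by (simp add: dist_norm)
qed

lemma key_same:
  fixes x y :: "real^'n::finite"
  assumes k: "k \<le> d" and L: "L > 0" and eq: "key d L k x = key d L k y"
  shows "\<bar>x$j - y$j\<bar> \<le> L"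
proof -
  have "kc d k (x$j / L) = kc d k (y$j / L)" using eq by (auto simp: key_def dest: fun_cong[where x=j])
  then have "\<bar>x$j / L - y$j / L\<bar> \<le> 1" by (rule kc_same[OF k])
  then have "\<bar>x$j / L - y$j / L\<bar> * L \<le> L" using L by (simp add: mult_right_mono)
  also have "\<bar>x$j / L - y$j / L\<bar> * L = \<bar>x$j - y$j\<bar>" using L by (simp add: field_simps abs_mult)
  finally show ?thesis .
qed

lemma cell_same:
  fixes x y :: "real^'n::finite"
  assumes "cell CARD('n) x = cell CARD('n) y"
  shows "dist x y < 1"
proof -
  let ?d = "real CARD('n)"
  have dpos: "?d > 0" by simp
  have c: "\<bar>(x - y)$j\<bar> < 1 / ?d" for j
  proof -
    have "\<lfloor>x$j * ?d\<rfloor> = \<lfloor>y$j * ?d\<rfloor>" using assms by (auto simp: cell_def dest: fun_cong[where x=j])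
    then have "\<bar>x$j * ?d - y$j * ?d\<bar> < 1" by linarith
    then have "\<bar>x$j - y$j\<bar> * ?d < 1" by (simp add: abs_mult left_diff_distrib[symmetric])
    then show ?thesis using dpos by (simp add: field_simps)
  qed
  have "dist x y = norm (x - y)" by (simp add: dist_norm)
  also have "\<dots> \<le> (\<Sum>j\<in>UNIV. \<bar>(x - y)$j\<bar>)" by (rule norm_le_l1_cart)
  also have "\<dots> < (\<Sum>j\<in>(UNIV::'n set). 1 / ?d)" using c by (intro sum_strict_mono) auto
  also have "\<dots> = 1" by simp
  finally show ?thesis .
qed

lemma cell_count:
  fixes S :: "(real^'n::finite) set"
  assumes L: "L \<ge> 0" and x0: "\<And>x j. x \<in> S \<Longrightarrow> \<bar>x$j - x0$j\<bar> \<le> L"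
  shows "card (cell CARD('n) ` S) \<le> (nat \<lceil>2 * L * real CARD('n)\<rceil> + 2) ^ CARD('n)"
proof -
  let ?d = "real CARD('n)"
  let ?K = "nat \<lceil>2 * L * ?d\<rceil> + 1"
  let ?c0 = "\<lambda>j. \<lfloor>(x0$j - L) * ?d\<rfloor>"
  let ?P = "PiE UNIV (\<lambda>j. {?c0 j .. ?c0 j + int ?K})"
  have sub: "cell CARD('n) ` S \<subseteq> ?P"
  proof
    fix c assume "c \<in> cell CARD('n) ` S"
    then obtain x where x: "x \<in> S" "c = cell CARD('n) x" by auto
    have "c j \<in> {?c0 j .. ?c0 j + int ?K}" for j
    proof -
      have b: "x0$j - L \<le> x$j" "x$j \<le> x0$j + L" using x0[OF x(1), of j] by auto
      have lo: "?c0 j \<le> \<lfloor>x$j * ?d\<rfloor>" using b by (intro floor_mono mult_right_mono) auto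
      have "x$j * ?d \<le> (x0$j - L) * ?d + 2 * L * ?d" proof -
        have "x$j * ?d \<le> (x0$j + L) * ?d" using b by (intro mult_right_mono) auto
        then show ?thesis by (simp add: algebra_simps)
      qed
      moreover have "(x0$j - L) * ?d < of_int (?c0 j) + 1" by linarith
      moreover have "2 * L * ?d \<le> of_int \<lceil>2 * L * ?d\<rceil>" by linarith
      moreover have "\<lceil>2 * L * ?d\<rceil> \<ge> 0"
      proof -
        have "2 * L * ?d \<ge> 0" using L by simp
        then show ?thesis by linarith
      qed
      ultimately have "\<lfloor>x$j * ?d\<rfloor> \<le> ?c0 j + int ?K" by linarith
      with lo show ?thesis using x by (simp add: cell_def)
    qed
    then show "c \<in> ?P" by auto
  qed
  have "card ?P = (\<Prod>j\<in>UNIV. card {?c0 j .. ?c0 j + int ?K})" by (rule card_PiE) simp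
  also have "\<dots> = (\<Prod>j\<in>(UNIV::'n set). ?K + 1)"
  proof (rule prod.cong)
    fix j show "card {?c0 j .. ?c0 j + int ?K} = ?K + 1" by (simp only: card_atLeastAtMost_int)
  qed simp
  also have "\<dots> = (?K + 1) ^ CARD('n)" by simp
  finally have "card ?P = (nat \<lceil>2 * L * ?d\<rceil> + 2) ^ CARD('n)" by simp
  moreover have "finite ?P" by (rule finite_PiE) auto
  ultimately show ?thesis using card_mono[OF _ sub] by metis
qed



definition LL :: "nat \<Rightarrow> real \<Rightarrow> real" where "LL d r = (r + 1) / hh d"
definition MM :: "nat \<Rightarrow> real \<Rightarrow> nat" where "MM d r = (nat \<lceil>2 * LL d r * real d\<rceil> + 2) ^ d"
definition DD :: "nat \<Rightarrow> real \<Rightarrow> real" where "DD d r = real (MM d r ^ 2) * (r + 1) + 1"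

lemma ubg_facts:
  fixes p :: "nat \<Rightarrow> real^'n::finite"
  assumes sg: "simple_graph V E" and pe: "\<forall>u\<in>V. \<forall>v\<in>V. u \<noteq> v \<longrightarrow> (E u v \<longleftrightarrow> dist (p u) (p v) \<le> 1)"
  shows Esym: "\<And>a b. E a b \<Longrightarrow> E b a"
    and eu: "\<And>u v a. dist_le V E u v a \<Longrightarrow> dist (p u) (p v) \<le> a"
    and samecell: "\<And>u v. u \<in> V \<Longrightarrow> v \<in> V \<Longrightarrow> cell CARD('n) (p u) = cell CARD('n) (p v) \<Longrightarrow> dist_le V E u v 1"
proof -
  show Es: "\<And>a b. E a b \<Longrightarrow> E b a" using sg unfolding simple_graph_def by blast
  have edge: "\<And>u v. u \<in> V \<Longrightarrow> v \<in> V \<Longrightarrow> E u v \<Longrightarrow> dist (p u) (p v) \<le> 1"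
    using sg pe unfolding simple_graph_def by blast
  show "\<And>u v a. dist_le V E u v a \<Longrightarrow> dist (p u) (p v) \<le> a"
  proof -
    fix u v a assume "dist_le V E u v a"
    then obtain xs where xs: "is_walk V E xs u v" "real (length xs - 1) \<le> a" by (rule dist_le_obtain)
    from walk_euclid[where p=p, OF edge xs(1)] xs(2) show "dist (p u) (p v) \<le> a" by simp
  qed
  show "\<And>u v. u \<in> V \<Longrightarrow> v \<in> V \<Longrightarrow> cell CARD('n) (p u) = cell CARD('n) (p v) \<Longrightarrow> dist_le V E u v 1"
  proof -
    fix u v assume u: "u \<in> V" and v: "v \<in> V" and c: "cell CARD('n) (p u) = cell CARD('n) (p v)"
    show "dist_le V E u v 1"
    proof (cases "u = v")
      case True then show ?thesis using is_walk_single[OF u] by (intro dist_le_walk[of _ _ "[u]"]) auto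
    next
      case False
      have "dist (p u) (p v) < 1" using cell_same[OF c] .
      then have "E u v" using pe u v False by auto
      then show ?thesis using is_walk_edge[OF u v] by (intro dist_le_walk[of _ _ "[u, v]"]) auto
    qed
  qed
qed

lemma chain_bound:
  fixes p :: "nat \<Rightarrow> real^'n::finite"
  assumes sg: "simple_graph V E" and pe: "\<forall>u\<in>V. \<forall>v\<in>V. u \<noteq> v \<longrightarrow> (E u v \<longleftrightarrow> dist (p u) (p v) \<le> 1)"
    and BV: "B \<subseteq> V"
    and R: "R = {(cell CARD('n) (p u), cell CARD('n) (p v)) | u v. u \<in> B \<and> v \<in> B \<and> dist_le V E u v r}"
  shows "(a, b) \<in> R ^^ n \<Longrightarrow> x \<in> B \<Longrightarrow> y \<in> B \<Longrightarrow> cell CARD('n) (p x) = a \<Longrightarrow> cell CARD('n) (p y) = b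
     \<Longrightarrow> dist_le V E x y (real n * (r + 1) + 1)"
proof (induction n arbitrary: b y)
  case 0
  then show ?case using samecell[OF sg pe, of x y] BV by auto
next
  case (Suc n)
  from Suc.prems(1) obtain c where c: "(a, c) \<in> R ^^ n" "(c, b) \<in> R" by (rule relpow_Suc_E)
  from c(2) obtain u v where uv: "u \<in> B" "v \<in> B" "dist_le V E u v r"
    "cell CARD('n) (p u) = c" "cell CARD('n) (p v) = b" unfolding R by blast
  have "dist_le V E x u (real n * (r + 1) + 1)" using Suc.IH[OF c(1) Suc.prems(2) uv(1) Suc.prems(4) uv(4)] .
  moreover have "dist_le V E v y 1" using samecell[OF sg pe, of v y] BV uv Suc.prems by auto
  ultimately have "dist_le V E x y ((real n * (r + 1) + 1) + r + 1)"
    using dist_le_trans[OF dist_le_trans[OF _ uv(3)]] by blast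
  then show ?case by (simp add: algebra_simps)
qed



lemma main:
  fixes p :: "nat \<Rightarrow> real^'n::finite" and r :: real
  assumes sg: "simple_graph V E" and pe: "\<forall>u\<in>V. \<forall>v\<in>V. u \<noteq> v \<longrightarrow> (E u v \<longleftrightarrow> dist (p u) (p v) \<le> 1)"
    and r: "r > 0"
  shows "\<exists>\<U> :: nat \<Rightarrow> nat set set.
        (\<forall>i\<le>CARD('n). \<forall>U\<in>\<U> i. U \<subseteq> V) \<and>
        (\<Union>i\<le>CARD('n). \<Union>(\<U> i)) = V \<and>
        (\<forall>i\<le>CARD('n). r_disjoint V E r (\<U> i) \<and> D_bounded V E (DD CARD('n) r) (\<U> i))"
proof -
  define d where "d = CARD('n)"
  define L where "L = LL d r"
  have hpos: "hh d > 0" by (rule hh_pos)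
  have Lpos: "L > 0" using r hpos by (simp add: L_def LL_def)
  have hL: "hh d * L = r + 1" using hpos by (simp add: L_def LL_def)
  define fx where "fx i v = fre d L i (p v)" for i v
  define ky where "ky i v = key d L i (p v)" for i v
  define cl where "cl v = cell d (p v)" for v
  define B where "B i \<kappa> = {v\<in>V. fx i v \<and> ky i v = \<kappa>}" for i \<kappa>
  define Rc where "Rc i \<kappa> = {(cl u, cl v) | u v. u \<in> B i \<kappa> \<and> v \<in> B i \<kappa> \<and> dist_le V E u v r}" for i \<kappa>
  define cls where "cls i u = {v \<in> B i (ky i u). (cl u, cl v) \<in> (Rc i (ky i u))\<^sup>*}" for i u
  define \<U> where "\<U> i = cls i ` {u\<in>V. fx i u}" for i
  have Es: "\<And>a b. E a b \<Longrightarrow> E b a" by (rule Esym[OF sg pe])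
  have BV: "B i \<kappa> \<subseteq> V" for i \<kappa> by (auto simp: B_def)
  have subV: "\<forall>U\<in>\<U> i. U \<subseteq> V" for i using BV by (auto simp: \<U>_def cls_def)
  have symR: "sym ((Rc i \<kappa>)\<^sup>*)" for i \<kappa>
  proof -
    have "sym (Rc i \<kappa>)" unfolding sym_def Rc_def using dist_le_sym[where E=E and V=V, OF Es] by blast
    then show ?thesis by (rule sym_rtrancl)
  qed
  have finR: "finite (Rc i \<kappa>)" and cardR: "card (Rc i \<kappa>) \<le> MM d r ^ 2" if i: "i \<le> d" for i \<kappa>
  proof -
    have sub: "Rc i \<kappa> \<subseteq> cl ` B i \<kappa> \<times> cl ` B i \<kappa>" by (auto simp: Rc_def)
    have finV: "finite V" using sg unfolding simple_graph_def by blast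
    have finB: "finite (B i \<kappa>)" using finV BV[of i \<kappa>] finite_subset by blast
    show fin: "finite (Rc i \<kappa>)" using sub finB by (meson finite_SigmaI finite_imageI finite_subset)
    have cB: "card (cl ` B i \<kappa>) \<le> MM d r"
    proof (cases "B i \<kappa> = {}")
      case True then show ?thesis by simp
    next
      case False
      then obtain u0 where u0: "u0 \<in> B i \<kappa>" by auto
      have bx: "\<bar>x$j - p u0 $j\<bar> \<le> L" if xin: "x \<in> p ` B i \<kappa>" for x j
      proof -
        obtain v where v: "v \<in> B i \<kappa>" "x = p v" using xin by auto
        have "key d L i (p v) = key d L i (p u0)" using v u0 by (simp add: B_def ky_def)
        then show "\<bar>x$j - p u0 $j\<bar> \<le> L" using key_same[OF i Lpos] v by blast
      qed
      have "card (cell CARD('n) ` (p ` B i \<kappa>)) \<le> (nat \<lceil>2 * L * real CARD('n)\<rceil> + 2) ^ CARD('n)"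
        by (rule cell_count[OF less_imp_le[OF Lpos] bx])
      moreover have "cell CARD('n) ` (p ` B i \<kappa>) = cl ` B i \<kappa>" by (auto simp: cl_def d_def image_image)
      ultimately show ?thesis by (simp add: MM_def L_def d_def)
    qed
    have "card (Rc i \<kappa>) \<le> card (cl ` B i \<kappa> \<times> cl ` B i \<kappa>)" using sub finB by (intro card_mono) auto
    also have "\<dots> = card (cl ` B i \<kappa>) ^ 2" by (simp add: card_cartesian_product power2_eq_square)
    also have "\<dots> \<le> MM d r ^ 2" using cB by (rule power_mono) simp
    finally show "card (Rc i \<kappa>) \<le> MM d r ^ 2" .
  qed
  have cover: "(\<Union>i\<le>d. \<Union>(\<U> i)) = V"
  proof
    show "(\<Union>i\<le>d. \<Union>(\<U> i)) \<subseteq> V" using subV by blast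
    show "V \<subseteq> (\<Union>i\<le>d. \<Union>(\<U> i))"
    proof
      fix v assume v: "v \<in> V"
      obtain k where k: "k \<le> d" "fre d L k (p v)" using exists_free[of L "p v"] by (auto simp: d_def)
      have "v \<in> cls k v" using v k by (simp add: cls_def B_def fx_def)
      moreover have "cls k v \<in> \<U> k" using v k by (auto simp: \<U>_def fx_def)
      ultimately show "v \<in> (\<Union>i\<le>d. \<Union>(\<U> i))" using k by blast
    qed
  qed
  have disj: "r_disjoint V E r (\<U> i)" if i: "i \<le> d" for i
    unfolding r_disjoint_def
  proof (intro ballI impI notI)
    fix U U' x y assume U: "U \<in> \<U> i" and U': "U' \<in> \<U> i" and ne: "U \<noteq> U'" and x: "x \<in> U" and y: "y \<in> U'"
      and dl: "dist_le V E x y r"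
    obtain u1 where u1: "u1 \<in> V" "fx i u1" "U = cls i u1" using U by (auto simp: \<U>_def)
    obtain u2 where u2: "u2 \<in> V" "fx i u2" "U' = cls i u2" using U' by (auto simp: \<U>_def)
    have xB: "x \<in> B i (ky i u1)" and cx: "(cl u1, cl x) \<in> (Rc i (ky i u1))\<^sup>*" using x u1 by (auto simp: cls_def)
    have yB: "y \<in> B i (ky i u2)" and cy: "(cl u2, cl y) \<in> (Rc i (ky i u2))\<^sup>*" using y u2 by (auto simp: cls_def)
    have kx: "ky i x = ky i u1" "fx i x" using xB by (auto simp: B_def)
    have kyy: "ky i y = ky i u2" "fx i y" using yB by (auto simp: B_def)
    show False
    proof (cases "ky i x = ky i y")
      case False
      have "dist (p x) (p y) \<ge> hh d * L" using key_sep[OF i Lpos, of "p x" "p y"] kx kyy False unfolding fx_def ky_def by metis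
      moreover have "dist (p x) (p y) \<le> r" using eu[OF sg pe dl] .
      ultimately show False using hL by linarith
    next
      case True
      define \<kappa> where "\<kappa> = ky i u1"
      have k2: "ky i u2 = \<kappa>" using True kx kyy by (simp add: \<kappa>_def)
      have xB': "x \<in> B i \<kappa>" using xB by (simp add: \<kappa>_def)
      have yB': "y \<in> B i \<kappa>" using yB k2 by simp
      have R: "(cl x, cl y) \<in> Rc i \<kappa>" using xB' yB' dl unfolding Rc_def by blast
      have s: "(b, a) \<in> (Rc i \<kappa>)\<^sup>*" if "(a, b) \<in> (Rc i \<kappa>)\<^sup>*" for a b
        using symR[of i \<kappa>] that unfolding sym_def by blast
      have cx': "(cl u1, cl x) \<in> (Rc i \<kappa>)\<^sup>*" using cx by (simp add: \<kappa>_def)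
      have cy': "(cl y, cl u2) \<in> (Rc i \<kappa>)\<^sup>*" using s cy k2 by simp
      have c12: "(cl u1, cl u2) \<in> (Rc i \<kappa>)\<^sup>*"
        using cx' R cy' by (meson rtrancl_into_rtrancl rtrancl_trans)
      have c21: "(cl u2, cl u1) \<in> (Rc i \<kappa>)\<^sup>*" using s c12 .
      have "cls i u1 = cls i u2"
        unfolding cls_def k2 \<kappa>_def[symmetric] using c12 c21 by (auto intro: rtrancl_trans)
      then show False using ne u1 u2 by simp
    qed
  qed
  have bnd: "D_bounded V E (DD d r) (\<U> i)" if i: "i \<le> d" for i
    unfolding D_bounded_def
  proof (intro ballI)
    fix U x y assume U: "U \<in> \<U> i" and x: "x \<in> U" and y: "y \<in> U"
    obtain u where u: "u \<in> V" "fx i u" "U = cls i u" using U by (auto simp: \<U>_def)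
    define \<kappa> where "\<kappa> = ky i u"
    have xB: "x \<in> B i \<kappa>" "(cl u, cl x) \<in> (Rc i \<kappa>)\<^sup>*" using x u by (auto simp: cls_def \<kappa>_def)
    have yB: "y \<in> B i \<kappa>" "(cl u, cl y) \<in> (Rc i \<kappa>)\<^sup>*" using y u by (auto simp: cls_def \<kappa>_def)
    have "(cl x, cl u) \<in> (Rc i \<kappa>)\<^sup>*" using symR[of i \<kappa>] xB(2) unfolding sym_def by blast
    then have "(cl x, cl y) \<in> (Rc i \<kappa>)\<^sup>*" using yB(2) by (rule rtrancl_trans)
    then obtain n where n: "n \<le> card (Rc i \<kappa>)" "(cl x, cl y) \<in> (Rc i \<kappa>) ^^ n"
      using rtrancl_finite_eq_relpow[OF finR[OF i]] by blast
    have Req: "Rc i \<kappa> = {(cell CARD('n) (p u), cell CARD('n) (p v)) | u v. u \<in> B i \<kappa> \<and> v \<in> B i \<kappa> \<and> dist_le V E u v r}"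
      by (simp add: Rc_def cl_def d_def)
    have "dist_le V E x y (real n * (r + 1) + 1)"
      by (rule chain_bound[OF sg pe BV[of i \<kappa>] Req n(2) xB(1) yB(1)]) (simp_all add: cl_def d_def)
    moreover have "real n * (r + 1) + 1 \<le> DD d r"
    proof -
      have "real n \<le> real (MM d r ^ 2)" using n(1) cardR[OF i, of \<kappa>] by simp
      then show ?thesis unfolding DD_def using r by (intro add_right_mono mult_right_mono) auto
    qed
    ultimately show "dist_le V E x y (DD d r)" by (rule dist_le_mono)
  qed
  show ?thesis using cover disj bnd subV unfolding d_def by blast
qed

theorem theorem6p3:
  shows "asdim_le {(V, E). unit_ball_graph TYPE('n::finite) V E} CARD('n)"
  unfolding asdim_le_def
proof (intro exI[of _ "DD CARD('n)"] conjI allI impI ballI)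
  fix r :: real assume "r > 0"
  then show "DD CARD('n) r > 0" unfolding DD_def by (intro add_nonneg_pos mult_nonneg_nonneg) auto
next
  fix G assume "G \<in> {(V, E). unit_ball_graph TYPE('n) V E}"
  then obtain V E where G: "G = (V, E)" "unit_ball_graph TYPE('n) V E" by auto
  then obtain p :: "nat \<Rightarrow> real^'n" where sg: "simple_graph V E"
    and pe: "\<forall>u\<in>V. \<forall>v\<in>V. u \<noteq> v \<longrightarrow> (E u v \<longleftrightarrow> dist (p u) (p v) \<le> 1)"
    unfolding unit_ball_graph_def by blast
  have "control_function CARD('n) (DD CARD('n)) V E"
    unfolding control_function_def using main[OF sg pe] by blast
  then show "case G of (V, E) \<Rightarrow> control_function CARD('n) (DD CARD('n)) V E" using G by simp
qed

end
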